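(* Let $k\geq1$, $n\geq2k$, let $\mathcal{S},\mathcal{T}$ be antichains in $\mathcal{F}=\mathcal{F}_{2k}^{[1,n]}$ with $\mathcal{T}\prec_p\mathcal{S}$, and let $i\geq1$. Then $$B(\mathcal{S},i)\setminus B(\mathcal{T},i)=\bigcup_{j\geq i}\Big(\big(B(\mathcal{S}([j,j+1]),j+2)\setminus B(\mathcal{T}([j,j+1]),j+2)\big)*\overline{[j,j+1]}\Big).$$
   Context: Notation: $[m,n]=\{m,\dots,n\}$; $d$-subsets of $[n]$ are identified with increasing vectors; $G\leq_p F$ means componentwise $\leq$ and $G\prec_p F$ means $G\leq_p F-\mathbf{1}_d$ ($\mathbf{1}_d$ the all-ones vector). For $r\geq1$, $\mathcal{F}_{2r}^{[m,n]}$ is the set of sets $\{i_1,i_1+1,\dots,i_r,i_r+1\}$ with $m\leq i_1$, $i_r\leq n-1$, $i_j\leq i_{j+1}-2$, ordered by $\leq_p$; $\mathcal{F}_0^{[m,n]}=\{\emptyset\}$. For antichains, $\mathcal{T}\prec_p\mathcal{S}$ means every $G\in\mathcal{T}$ satisfies $G\prec_p F$ for some $F\in\mathcal{S}$. $\mathcal{F}_{2r}(\mathcal{S})$ is the order ideal generated by $\mathcal{S}$. For $1\leq\ell\leq k$ and $J=[j,j+2\ell-1]$, $\mathcal{S}(J)\subseteq\mathcal{F}_{2(k-\ell)}^{[1,n]}$ is the set of maximal elements of $\{H\in\mathcal{F}_{2(k-\ell)}^{[1,n]}: H\subseteq[j+2\ell,n],\ J\cup H\in\mathcal{F}(\mathcal{S})\}$.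 $B(\mathcal{S},m)$ is the pure complex whose facets are the sets of $\mathcal{F}(\mathcal{S})\cap\mathcal{F}_{2k}^{[m,n]}$; $B(\mathcal{S}(J),m)$ is the pure complex whose facets are the sets of $\mathcal{F}_{2(k-\ell)}(\mathcal{S}(J))\cap\mathcal{F}_{2(k-\ell)}^{[m,n]}$. For pure complexes $X,Y$, $X\setminus Y$ is the complex generated by the facets of $X$ that are not facets of $Y$. $\overline{V}$ is the full simplex on $V$, $*$ is the join (join with the void complex is void). *)

theory Defs
  imports Main
begin

text \<open>d-subsets of [n] are identified with increasing vectors: the t-th entry
  (0-based) of a finite set G of naturals is sorted_list_of_set G ! t.\<close>

definition leq_p :: "nat set \<Rightarrow> nat set \<Rightarrow> bool" where
  "leq_p G F \<longleftrightarrow> card G = card F \<and>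
     (\<forall>t < card F. sorted_list_of_set G ! t \<le> sorted_list_of_set F ! t)"

definition prec_p :: "nat set \<Rightarrow> nat set \<Rightarrow> bool" where
  "prec_p G F \<longleftrightarrow> card G = card F \<and>
     (\<forall>t < card F. sorted_list_of_set G ! t + 1 \<le> sorted_list_of_set F ! t)"

text \<open>F_{2r}^{[m,n]}: unions of r dominoes {i,i+1} with m \<le> i, i+1 \<le> n,
  consecutive starting points at distance at least 2. For r = 0 this is {{}}.\<close>
definition fam :: "nat \<Rightarrow> nat \<Rightarrow> nat \<Rightarrow> nat set set" where
  "fam r m n = {(\<Union>i\<in>I. {i, i+1}) | I. finite I \<and> card I = r \<and>
      (\<forall>i\<in>I. m \<le> i \<and> i + 1 \<le> n) \<and> (\<forall>i\<in>I. \<forall>i'\<in>I. i < i' \<longrightarrow> i + 2 \<le> i')}"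

definition antichain_p :: "nat \<Rightarrow> nat \<Rightarrow> nat set set \<Rightarrow> bool" where
  "antichain_p n k S \<longleftrightarrow> S \<subseteq> fam k 1 n \<and>
     (\<forall>F\<in>S. \<forall>G\<in>S. leq_p F G \<longrightarrow> F = G)"

definition prec_fam :: "nat set set \<Rightarrow> nat set set \<Rightarrow> bool" where
  "prec_fam T S \<longleftrightarrow> (\<forall>G\<in>T. \<exists>F\<in>S. prec_p G F)"

definition ideal_p :: "nat \<Rightarrow> nat \<Rightarrow> nat set set \<Rightarrow> nat set set" where
  "ideal_p n r S = {G \<in> fam r 1 n. \<exists>F\<in>S. leq_p G F}"

text \<open>S(J) for J = [j, j+2l-1]: maximal elements (w.r.t. \<le>_p) of
  {H \<in> F_{2(k-l)}^{[1,n]}. H \<subseteq> [j+2l, n], J \<union> H \<in> F(S)}.\<close>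
definition link_fam :: "nat \<Rightarrow> nat \<Rightarrow> nat \<Rightarrow> nat set set \<Rightarrow> nat \<Rightarrow> nat set set" where
  "link_fam n k l S j =
     (let P = {H \<in> fam (k - l) 1 n. H \<subseteq> {j + 2*l..n} \<and> {j..j + 2*l - 1} \<union> H \<in> ideal_p n k S}
      in {H \<in> P. \<forall>H'\<in>P. leq_p H H' \<longrightarrow> H' = H})"

text \<open>Simplicial complexes are represented by their set of faces (the void
  complex is the empty set of faces; the complex {{}} is not void).\<close>

definition gen :: "nat set set \<Rightarrow> nat set set" where
  "gen \<Phi> = {\<sigma>. \<exists>F\<in>\<Phi>. \<sigma> \<subseteq> F}"

definition facets :: "nat set set \<Rightarrow> nat set set" where
  "facets X = {F \<in> X. \<forall>G\<in>X. F \<subseteq> G \<longrightarrow> G = F}"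

definition cdiff :: "nat set set \<Rightarrow> nat set set \<Rightarrow> nat set set" where
  "cdiff X Y = gen (facets X - facets Y)"

definition join :: "nat set set \<Rightarrow> nat set set \<Rightarrow> nat set set" where
  "join X Y = {\<sigma> \<union> \<tau> | \<sigma> \<tau>. \<sigma> \<in> X \<and> \<tau> \<in> Y}"

definition Bcx :: "nat \<Rightarrow> nat \<Rightarrow> nat set set \<Rightarrow> nat \<Rightarrow> nat set set" where
  "Bcx n r S m = gen (ideal_p n r S \<inter> fam r m n)"

end

theory Submission
  imports Defs
begin

lemma fam_sub: "F \<in> fam r m n \<Longrightarrow> F \<subseteq> {m..n}"
  unfolding fam_def by auto

lemma fam_card: assumes "F \<in> fam r m n" shows "finite F \<and> card F = 2*r"
proof -
  obtain I where F: "F = (\<Union>i\<in>I. {i, i+1})" and I: "finite I" "card I = r"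
    and sep: "\<forall>i\<in>I. \<forall>i'\<in>I. i < i' \<longrightarrow> i + 2 \<le> i'"
    using assms unfolding fam_def by blast
  have "card F = (\<Sum>i\<in>I. card {i, i+1})"
    unfolding F
  proof (rule card_UN_disjoint[OF I(1)])
    show "\<forall>i\<in>I. finite {i, i + 1}" by simp
    show "\<forall>i\<in>I. \<forall>j\<in>I. i \<noteq> j \<longrightarrow> {i, i + 1} \<inter> {j, j + 1} = {}"
    proof (intro ballI impI)
      fix i j assume "i \<in> I" "j \<in> I" "i \<noteq> j"
      then have "i + 2 \<le> j \<or> j + 2 \<le> i" using sep by (metis linorder_neqE_nat)
      then show "{i, i + 1} \<inter> {j, j + 1} = {}" by auto
    qed
  qed
  also have "\<dots> = 2 * r" using I by simp
  finally show ?thesis using F I by auto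
qed

lemma fam_decomp:
  assumes "1 \<le> k" "F \<in> fam k m n"
  shows "\<exists>j H. m \<le> j \<and> j+1 \<le> n \<and> H \<in> fam (k-1) (j+2) n \<and> F = {j,j+1} \<union> H"
proof -
  obtain I where F: "F = (\<Union>i\<in>I. {i, i+1})" and I: "finite I" "card I = k"
    and rng: "\<forall>i\<in>I. m \<le> i \<and> i + 1 \<le> n"
    and sep: "\<forall>i\<in>I. \<forall>i'\<in>I. i < i' \<longrightarrow> i + 2 \<le> i'"
    using assms(2) unfolding fam_def by blast
  have ne: "I \<noteq> {}" using I assms(1) by auto
  define j where "j = Min I"
  have jI: "j \<in> I" using ne I j_def by simp
  define I' where "I' = I - {j}"
  have cI': "card I' = k - 1" using I jI I'_def by simp
  have gt: "\<forall>i\<in>I'. j + 2 \<le> i"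
  proof
    fix i assume "i \<in> I'"
    then have "i \<in> I" "i \<noteq> j" using I'_def by auto
    then have "j < i" using j_def I by (metis Min_le le_neq_implies_less)
    then show "j + 2 \<le> i" using sep jI \<open>i \<in> I\<close> by blast
  qed
  define H where "H = (\<Union>i\<in>I'. {i, i+1})"
  have "H \<in> fam (k-1) (j+2) n"
    unfolding fam_def H_def using I cI' gt rng sep I'_def by blast
  moreover have "F = {j,j+1} \<union> H"
    unfolding F H_def I'_def using jI by blast
  ultimately show ?thesis using rng jI by blast
qed

lemma fam_comp:
  assumes "m \<le> j" "j+1 \<le> n" "H \<in> fam r (j+2) n"
  shows "{j,j+1} \<union> H \<in> fam (Suc r) m n"
proof -
  obtain I where F: "H = (\<Union>i\<in>I. {i, i+1})" and I: "finite I" "card I = r"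
    and rng: "\<forall>i\<in>I. j+2 \<le> i \<and> i + 1 \<le> n"
    and sep: "\<forall>i\<in>I. \<forall>i'\<in>I. i < i' \<longrightarrow> i + 2 \<le> i'"
    using assms(3) unfolding fam_def by blast
  have nj: "j \<notin> I" using rng by force
  have "{j,j+1} \<union> H = (\<Union>i\<in>insert j I. {i, i+1})" using F by auto
  moreover have "finite (insert j I) \<and> card (insert j I) = Suc r \<and>
      (\<forall>i\<in>insert j I. m \<le> i \<and> i + 1 \<le> n) \<and>
      (\<forall>i\<in>insert j I. \<forall>i'\<in>insert j I. i < i' \<longrightarrow> i + 2 \<le> i')"
    using I nj rng sep assms(1,2) by fastforce
  ultimately show ?thesis unfolding fam_def by blast
qed

lemma split_unique:
  assumes "{j::nat,j+1} \<union> H = {j',j'+1} \<union> H'" "H \<subseteq> {j+2..}" "H' \<subseteq> {j'+2..}"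
  shows "j = j' \<and> H = H'"
proof -
  have a: "j' \<le> j"
  proof -
    have "j \<in> {j',j'+1} \<union> H'" using assms(1) by blast
    then show ?thesis using assms(3) by auto
  qed
  have b: "j \<le> j'"
  proof -
    have "j' \<in> {j,j+1} \<union> H" using assms(1) by blast
    then show ?thesis using assms(2) by auto
  qed
  have "j = j'" using a b by simp
  moreover have "H = ({j,j+1} \<union> H) - {j,j+1}" using assms(2) by auto
  moreover have "H' = ({j',j'+1} \<union> H') - {j',j'+1}" using assms(3) by auto
  ultimately show ?thesis using assms(1) by metis
qed

lemma sl_cons:
  fixes H :: "nat set"
  assumes "finite H" "H \<subseteq> {j+2..}"
  shows "sorted_list_of_set ({j,j+1} \<union> H) = j # (j+1) # sorted_list_of_set H"
proof -
  have "sorted_wrt (<) (j # (j+1) # sorted_list_of_set H) \<and>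
        set (j # (j+1) # sorted_list_of_set H) = {j,j+1} \<union> H \<and>
        length (j # (j+1) # sorted_list_of_set H) = card ({j,j+1} \<union> H)"
  proof (intro conjI)
    show "sorted_wrt (<) (j # (j+1) # sorted_list_of_set H)"
      using assms by (auto simp: strict_sorted_list_of_set)
    show "set (j # (j+1) # sorted_list_of_set H) = {j,j+1} \<union> H" using assms by auto
    have "j \<notin> H" "j+1 \<notin> H" using assms by auto
    then show "length (j # (j+1) # sorted_list_of_set H) = card ({j,j+1} \<union> H)"
      using assms by (simp add: card_insert_if)
  qed
  moreover have fin: "finite ({j,j+1} \<union> H)" using assms by simp
  ultimately show ?thesis using sorted_list_of_set_unique[OF fin] by blast
qed

lemma leq_p_lift:
  fixes H :: "nat set"
  assumes "finite H" "finite H'" "H \<subseteq> {j+2..}" "H' \<subseteq> {j+2..}" "leq_p H H'"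
  shows "leq_p ({j,j+1} \<union> H) ({j,j+1} \<union> H')"
proof -
  have c1: "card ({j,j+1} \<union> H) = card H + 2"
  proof -
    have "card ({j,j+1} \<union> H) = length (sorted_list_of_set ({j,j+1} \<union> H))"
      by (simp only: length_sorted_list_of_set)
    also have "\<dots> = card H + 2" unfolding sl_cons[OF assms(1,3)] by simp
    finally show ?thesis .
  qed
  have c2: "card ({j,j+1} \<union> H') = card H' + 2"
  proof -
    have "card ({j,j+1} \<union> H') = length (sorted_list_of_set ({j,j+1} \<union> H'))"
      by (simp only: length_sorted_list_of_set)
    also have "\<dots> = card H' + 2" unfolding sl_cons[OF assms(2,4)] by simp
    finally show ?thesis .
  qed
  have cc: "card H = card H'" using assms(5) unfolding leq_p_def by simp
  have pw: "\<And>t. t < card H' \<Longrightarrow> sorted_list_of_set H ! t \<le> sorted_list_of_set H' ! t"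
    using assms(5) unfolding leq_p_def by simp
  show ?thesis unfolding leq_p_def
  proof (intro conjI allI impI)
    show "card ({j, j + 1} \<union> H) = card ({j, j + 1} \<union> H')" using c1 c2 cc by simp
    fix t assume t: "t < card ({j, j + 1} \<union> H')"
    have "(j # (j+1) # sorted_list_of_set H) ! t \<le> (j # (j+1) # sorted_list_of_set H') ! t"
    proof (cases t)
      case (Suc t1) then show ?thesis
      proof (cases t1)
        case (Suc t2)
        then have "t2 < card H'" using t c2 \<open>t = Suc t1\<close> by simp
        then show ?thesis using pw[of t2] \<open>t = Suc t1\<close> Suc by simp
      qed simp
    qed simp
    then show "sorted_list_of_set ({j, j + 1} \<union> H) ! t \<le> sorted_list_of_set ({j, j + 1} \<union> H') ! t"
      by (simp only: sl_cons[OF assms(1,3)] sl_cons[OF assms(2,4)])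
  qed
qed

lemma leq_p_trans: "leq_p A B \<Longrightarrow> leq_p B C \<Longrightarrow> leq_p A C"
  unfolding leq_p_def by (metis le_trans)

lemma leq_p_refl: "leq_p A A"
  unfolding leq_p_def by simp

lemma leq_p_sum:
  assumes "finite G" "finite F" "leq_p G F"
  shows "sum id G \<le> sum id F \<and> (sum id G = sum id F \<longrightarrow> G = F)"
proof -
  let ?g = "sorted_list_of_set G" and ?f = "sorted_list_of_set F"
  have len: "length ?g = length ?f" "length ?f = card F"
    using assms unfolding leq_p_def by simp_all
  have pw: "\<forall>t\<in>{0..<card F}. ?g ! t \<le> ?f ! t" using assms unfolding leq_p_def by simp
  have sg: "sum id G = (\<Sum>t = 0..<card F. ?g ! t)"
  proof -
    have "sum id G = sum_list (map id ?g)"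
      using sum_list_distinct_conv_sum_set[of ?g id] assms(1) by simp
    also have "\<dots> = (\<Sum>t = 0..<length ?g. ?g ! t)" by (simp add: sum_list_sum_nth)
    finally show ?thesis using len by simp
  qed
  have sf: "sum id F = (\<Sum>t = 0..<card F. ?f ! t)"
  proof -
    have "sum id F = sum_list (map id ?f)"
      using sum_list_distinct_conv_sum_set[of ?f id] assms(2) by simp
    also have "\<dots> = (\<Sum>t = 0..<length ?f. ?f ! t)" by (simp add: sum_list_sum_nth)
    finally show ?thesis using len by simp
  qed
  have le: "sum id G \<le> sum id F" unfolding sg sf using pw by (intro sum_mono) auto
  moreover have "sum id G = sum id F \<longrightarrow> G = F"
  proof
    assume eq: "sum id G = sum id F"
    have "\<forall>t\<in>{0..<card F}. ?g ! t = ?f ! t"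
    proof (rule ccontr)
      assume "\<not> ?thesis"
      then obtain t where "t \<in> {0..<card F}" "?g ! t < ?f ! t" using pw by force
      then have "(\<Sum>t = 0..<card F. ?g ! t) < (\<Sum>t = 0..<card F. ?f ! t)"
        using pw by (intro sum_strict_mono_ex1) auto
      then show False using eq sg sf by simp
    qed
    then have "?g = ?f" using len by (auto intro: nth_equalityI)
    then show "G = F" using assms(1,2) by (metis set_sorted_list_of_set)
  qed
  ultimately show ?thesis by blast
qed

lemma exists_max:
  assumes "finite P" "H \<in> P" "\<forall>x\<in>P. finite x"
  shows "\<exists>H'\<in>P. leq_p H H' \<and> (\<forall>H''\<in>P. leq_p H' H'' \<longrightarrow> H'' = H')"
proof -
  define Q where "Q = {x\<in>P. leq_p H x}"
  have fQ: "finite Q" "H \<in> Q" using assms leq_p_refl Q_def by auto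
  then obtain H' where H': "H' \<in> Q" "sum id H' = Max (sum id ` Q)"
    by (metis (no_types, lifting) Max_in empty_iff finite_imageI image_iff image_is_empty)
  have "\<forall>H''\<in>P. leq_p H' H'' \<longrightarrow> H'' = H'"
  proof (intro ballI impI)
    fix H'' assume h: "H'' \<in> P" "leq_p H' H''"
    then have "H'' \<in> Q" using H'(1) Q_def leq_p_trans by auto
    then have "sum id H'' \<le> sum id H'" using H'(2) fQ by simp
    moreover have "finite H'" "finite H''" using H'(1) h(1) assms(3) Q_def by auto
    ultimately show "H'' = H'" using leq_p_sum[OF _ _ h(2)] by (metis le_antisym)
  qed
  then show ?thesis using H'(1) Q_def by auto
qed

lemma facets_gen:
  assumes "\<Phi> \<subseteq> fam r m n"
  shows "facets (gen \<Phi>) = \<Phi>"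
proof -
  have fc: "\<And>F. F \<in> \<Phi> \<Longrightarrow> finite F \<and> card F = 2*r" using assms fam_card by blast
  show ?thesis
  proof
    show "facets (gen \<Phi>) \<subseteq> \<Phi>"
    proof
      fix F assume "F \<in> facets (gen \<Phi>)"
      then have F: "F \<in> gen \<Phi>" "\<forall>G\<in>gen \<Phi>. F \<subseteq> G \<longrightarrow> G = F" unfolding facets_def by auto
      then obtain F' where "F' \<in> \<Phi>" "F \<subseteq> F'" unfolding gen_def by auto
      moreover then have "F' \<in> gen \<Phi>" unfolding gen_def by auto
      ultimately show "F \<in> \<Phi>" using F(2) by metis
    qed
    show "\<Phi> \<subseteq> facets (gen \<Phi>)"
    proof
      fix F assume F: "F \<in> \<Phi>"
      have "\<forall>G\<in>gen \<Phi>. F \<subseteq> G \<longrightarrow> G = F"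
      proof (intro ballI impI)
        fix G assume "G \<in> gen \<Phi>" "F \<subseteq> G"
        then obtain F' where F': "F' \<in> \<Phi>" "G \<subseteq> F'" unfolding gen_def by auto
        then have "F = F'" using fc F \<open>F \<subseteq> G\<close> by (metis card_subset_eq subset_trans)
        then show "G = F" using F' \<open>F \<subseteq> G\<close> by auto
      qed
      moreover have "F \<in> gen \<Phi>" using F unfolding gen_def by auto
      ultimately show "F \<in> facets (gen \<Phi>)" unfolding facets_def by auto
    qed
  qed
qed

lemma join_gen: "join (gen A) (Pow D) = gen ((\<lambda>H. D \<union> H) ` A)"
proof (intro equalityI subsetI)
  fix x assume "x \<in> join (gen A) (Pow D)"
  then obtain s t where st: "x = s \<union> t" "s \<in> gen A" "t \<subseteq> D" unfolding join_def by auto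
  then obtain F where "F \<in> A" "s \<subseteq> F" unfolding gen_def by auto
  then have "x \<subseteq> D \<union> F" "D \<union> F \<in> (\<lambda>H. D \<union> H) ` A" using st by auto
  then show "x \<in> gen ((\<lambda>H. D \<union> H) ` A)" unfolding gen_def by blast
next
  fix x assume "x \<in> gen ((\<lambda>H. D \<union> H) ` A)"
  then obtain H where H: "H \<in> A" "x \<subseteq> D \<union> H" unfolding gen_def by auto
  then have e: "x = (x - D) \<union> (x \<inter> D)" "x - D \<subseteq> H" "x \<inter> D \<in> Pow D" by auto
  then have "x - D \<in> gen A" using H unfolding gen_def by auto
  then show "x \<in> join (gen A) (Pow D)" unfolding join_def using e by blast
qed

lemma gen_UN: "gen (\<Union>j\<in>J. A j) = (\<Union>j\<in>J. gen (A j))"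
  unfolding gen_def by blast

lemma finite_fam: "finite (fam r 1 n)"
proof -
  have "fam r 1 n \<subseteq> Pow {1..n}" using fam_sub by blast
  then show ?thesis by (meson finite_Pow_iff finite_atLeastAtMost finite_subset)
qed

lemma fam_mono: assumes "m' \<le> m" shows "fam r m n \<subseteq> fam r m' n"
proof
  fix F assume "F \<in> fam r m n"
  then obtain I where "F = (\<Union>i\<in>I. {i, i+1})" "finite I" "card I = r"
    "\<forall>i\<in>I. m \<le> i \<and> i + 1 \<le> n" "\<forall>i\<in>I. \<forall>i'\<in>I. i < i' \<longrightarrow> i + 2 \<le> i'"
    unfolding fam_def by blast
  moreover have "\<forall>i\<in>I. m' \<le> i \<and> i + 1 \<le> n" using calculation(4) assms by auto
  ultimately show "F \<in> fam r m' n" unfolding fam_def by blast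
qed

lemma charA:
  assumes "1 \<le> k" "1 \<le> j"
  shows "H \<in> ideal_p n (k-1) (link_fam n k 1 X j) \<inter> fam (k-1) (j+2) n \<longleftrightarrow>
         H \<in> fam (k-1) (j+2) n \<and> {j,j+1} \<union> H \<in> ideal_p n k X"
proof -
  have jj: "{j..j + 2*1 - 1} = {j, j+1}" by auto
  define P where "P = {H \<in> fam (k - 1) 1 n. H \<subseteq> {j + 2..n} \<and> {j,j+1} \<union> H \<in> ideal_p n k X}"
  have L: "link_fam n k 1 X j = {H \<in> P. \<forall>H'\<in>P. leq_p H H' \<longrightarrow> H' = H}"
    unfolding link_fam_def P_def jj by simp
  have famj: "\<And>H. H \<in> fam (k-1) (j+2) n \<Longrightarrow> H \<in> fam (k-1) 1 n \<and> H \<subseteq> {j+2..n}"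
  proof -
    fix H assume "H \<in> fam (k-1) (j+2) n"
    then show "H \<in> fam (k-1) 1 n \<and> H \<subseteq> {j+2..n}" using fam_sub fam_mono[of 1 "j+2" "k-1" n] by auto
  qed
  show ?thesis
  proof
    assume h: "H \<in> ideal_p n (k-1) (link_fam n k 1 X j) \<inter> fam (k-1) (j+2) n"
    then obtain H' where H': "H' \<in> P" "leq_p H H'" unfolding ideal_p_def L by auto
    then have i': "{j,j+1} \<union> H' \<in> ideal_p n k X" "H' \<subseteq> {j+2..n}" "H' \<in> fam (k-1) 1 n"
      unfolding P_def by auto
    then obtain F where F: "F \<in> X" "leq_p ({j,j+1} \<union> H') F" "{j,j+1} \<union> H' \<in> fam k 1 n"
      unfolding ideal_p_def by auto
    have jn: "j+1 \<le> n" using fam_sub[OF F(3)] by auto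
    have hf: "H \<in> fam (k-1) (j+2) n" using h by auto
    have hh: "H \<subseteq> {j+2..}" "H' \<subseteq> {j+2..}" "finite H" "finite H'"
      using famj[OF hf] i' fam_card[OF hf] fam_card[OF i'(3)] by auto
    have "leq_p ({j,j+1} \<union> H) ({j,j+1} \<union> H')"
      using leq_p_lift[OF hh(3,4,1,2) H'(2)] .
    then have "leq_p ({j,j+1} \<union> H) F" using F(2) leq_p_trans by blast
    moreover have "{j,j+1} \<union> H \<in> fam k 1 n"
      using fam_comp[OF assms(2) jn hf] assms(1) by simp
    ultimately show "H \<in> fam (k-1) (j+2) n \<and> {j,j+1} \<union> H \<in> ideal_p n k X"
      using hf F(1) unfolding ideal_p_def by auto
  next
    assume h: "H \<in> fam (k-1) (j+2) n \<and> {j,j+1} \<union> H \<in> ideal_p n k X"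
    then have HP: "H \<in> P" unfolding P_def using famj by auto
    have fP: "finite P" using finite_fam unfolding P_def by (rule rev_finite_subset) auto
    have "\<forall>x\<in>P. finite x" unfolding P_def using fam_card by auto
    then obtain H' where "H' \<in> P" "leq_p H H'" "\<forall>H''\<in>P. leq_p H' H'' \<longrightarrow> H'' = H'"
      using exists_max[OF fP HP] by blast
    then have "H' \<in> link_fam n k 1 X j" unfolding L by auto
    then show "H \<in> ideal_p n (k-1) (link_fam n k 1 X j) \<inter> fam (k-1) (j+2) n"
      unfolding ideal_p_def using h famj \<open>leq_p H H'\<close> by auto
  qed
qed

theorem corollary3p7:
  fixes k n i :: nat and S T :: "nat set set"
  assumes "1 \<le> k" and "2 * k \<le> n"
    and "antichain_p n k S" and "antichain_p n k T"
    and "prec_fam T S" and "1 \<le> i"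
  shows "cdiff (Bcx n k S i) (Bcx n k T i) =
    (\<Union>j\<in>{i..}. join (cdiff (Bcx n (k - 1) (link_fam n k 1 S j) (j + 2))
                             (Bcx n (k - 1) (link_fam n k 1 T j) (j + 2)))
                      (Pow {j, j + 1}))"
proof -
  define A where "A X j = ideal_p n (k-1) (link_fam n k 1 X j) \<inter> fam (k-1) (j+2) n" for X j
  define \<Phi> where "\<Phi> X = ideal_p n k X \<inter> fam k i n" for X
  have lhs: "cdiff (Bcx n k S i) (Bcx n k T i) = gen (\<Phi> S - \<Phi> T)"
    unfolding cdiff_def Bcx_def \<Phi>_def
    by (subst facets_gen[of _ k i n], blast)+ simp
  have rhs: "join (cdiff (Bcx n (k - 1) (link_fam n k 1 S j) (j + 2))
                             (Bcx n (k - 1) (link_fam n k 1 T j) (j + 2)))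
                      (Pow {j, j + 1}) = gen ((\<lambda>H. {j,j+1} \<union> H) ` (A S j - A T j))" for j
    unfolding cdiff_def Bcx_def A_def join_gen
    by (subst facets_gen[of _ "k-1" "j+2" n], blast)+ simp
  have key: "\<Phi> S - \<Phi> T = (\<Union>j\<in>{i..}. (\<lambda>H. {j,j+1} \<union> H) ` (A S j - A T j))"
  proof (intro equalityI subsetI)
    fix F assume F: "F \<in> \<Phi> S - \<Phi> T"
    then have "F \<in> fam k i n" unfolding \<Phi>_def by auto
    then obtain j H where jH: "i \<le> j" "j+1 \<le> n" "H \<in> fam (k-1) (j+2) n" "F = {j,j+1} \<union> H"
      using fam_decomp[OF assms(1)] by blast
    have j1: "1 \<le> j" using jH(1) assms(6) by simp
    have "H \<in> A S j" unfolding A_def using charA[OF assms(1) j1] F jH \<Phi>_def by auto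
    moreover have "H \<notin> A T j" unfolding A_def using charA[OF assms(1) j1] F jH \<Phi>_def
      \<open>F \<in> fam k i n\<close> by auto
    ultimately show "F \<in> (\<Union>j\<in>{i..}. (\<lambda>H. {j,j+1} \<union> H) ` (A S j - A T j))"
      using jH by auto
  next
    fix F assume "F \<in> (\<Union>j\<in>{i..}. (\<lambda>H. {j,j+1} \<union> H) ` (A S j - A T j))"
    then obtain j H where jH: "i \<le> j" "H \<in> A S j" "H \<notin> A T j" "F = {j,j+1} \<union> H" by auto
    have j1: "1 \<le> j" using jH(1) assms(6) by simp
    have h1: "H \<in> fam (k-1) (j+2) n" "F \<in> ideal_p n k S"
      using charA[OF assms(1) j1] jH unfolding A_def by auto
    have h2: "F \<notin> ideal_p n k T"
      using charA[OF assms(1) j1, of H n T] jH h1 unfolding A_def by auto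
    have "F \<in> fam k 1 n" using h1 unfolding ideal_p_def by auto
    then have "j+1 \<le> n" using fam_sub jH(4) by fastforce
    then have "F \<in> fam k i n" using fam_comp[OF jH(1) _ h1(1)] jH(4) assms(1) by simp
    then show "F \<in> \<Phi> S - \<Phi> T" using h1 h2 unfolding \<Phi>_def by auto
  qed
  show ?thesis unfolding lhs rhs key gen_UN ..
qed

end
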